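(* Let $W,V$ be subspaces of $\mathbb{R}^n$ with $\mathbb{R}^n=W\oplus V^\perp$, and let $\mu\in\mathcal{P}_2(W)$ be a probabilistic frame for $W$ with frame operator $\mathbf{S}_\mu$. Fix $\mathbf{f}\in\mathbb{R}^n$ and suppose $\boldsymbol{\pi}_{WV^\perp}\mathbf{f}=\int_W\mathbf{x}\,\omega(\mathbf{x})\,d\mu(\mathbf{x})$ for some $\omega\in L^2(\mu,W)$. Then $$\int_W|\omega(\mathbf{x})|^2d\mu(\mathbf{x})=\int_W|\langle\mathbf{f},\boldsymbol{\pi}_{VW^\perp}\mathbf{S}_\mu^\dagger\mathbf{x}\rangle|^2d\mu(\mathbf{x})+\int_W|\omega(\mathbf{x})-\langle\mathbf{f},\boldsymbol{\pi}_{VW^\perp}\mathbf{S}_\mu^\dagger\mathbf{x}\rangle|^2d\mu(\mathbf{x}).$$ Consequently $\int_W|\omega(\mathbf{x})|^2d\mu(\mathbf{x})\ge\int_W|\langle\mathbf{f},\boldsymbol{\pi}_{VW^\perp}\mathbf{S}_\mu^\dagger\mathbf{x}\rangle|^2d\mu(\mathbf{x})$, with equality if and only if $\omega(\mathbf{x})=\langle\mathbf{f},\boldsymbol{\pi}_{VW^\perp}\mathbf{S}_\mu^\dagger\mathbf{x}\rangle$ for $\mu$-almost all $\mathbf{x}\in W$.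
   Context: $\mathcal{P}_2(W)$ denotes Borel probability measures on $\mathbb{R}^n$ concentrated on $W$ with finite second moment. $\mu\in\mathcal{P}_2(W)$ is a probabilistic frame for $W$ if there exist $0<A\le B<\infty$ with $A\|\mathbf{x}\|^2\le\int_W|\langle\mathbf{x},\mathbf{y}\rangle|^2d\mu(\mathbf{y})\le B\|\mathbf{x}\|^2$ for all $\mathbf{x}\in W$; its frame operator is $\mathbf{S}_\mu=\int_W\mathbf{y}\mathbf{y}^td\mu(\mathbf{y})$, with Moore–Penrose inverse $\mathbf{S}_\mu^\dagger$. $L^2(\mu,W)$ is the space of real-valued square-$\mu$-integrable functions on $W$. $\boldsymbol{\pi}_{WV^\perp}$ is the oblique projection onto $W$ along $V^\perp$ and $\boldsymbol{\pi}_{VW^\perp}$ the oblique projection onto $V$ along $W^\perp$. *)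

theory Defs
  imports "HOL-Analysis.Analysis" "HOL-Probability.Probability"
begin

definition mp_pinv :: "real^'n^'n \<Rightarrow> real^'n^'n" where
  "mp_pinv A = (THE B. A ** B ** A = A \<and> B ** A ** B = B \<and>
      transpose (A ** B) = A ** B \<and> transpose (B ** A) = B ** A)"

definition direct_sum_univ :: "('a::real_vector) set \<Rightarrow> 'a set \<Rightarrow> bool" where
  "direct_sum_univ W U \<longleftrightarrow> subspace W \<and> subspace U \<and> W \<inter> U = {0} \<and>
      (\<forall>x. \<exists>w u. w \<in> W \<and> u \<in> U \<and> x = w + u)"

text \<open>Oblique projection onto W along U (meaningful when UNIV = W (+) U).\<close>
definition oblique_proj :: "('a::real_vector) set \<Rightarrow> 'a set \<Rightarrow> 'a \<Rightarrow> 'a" where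
  "oblique_proj W U x = (THE w. w \<in> W \<and> x - w \<in> U)"

definition P2 :: "('a::euclidean_space) set \<Rightarrow> 'a measure \<Rightarrow> bool" where
  "P2 W \<mu> \<longleftrightarrow> prob_space \<mu> \<and> sets \<mu> = sets borel \<and> (AE x in \<mu>. x \<in> W) \<and>
      integrable \<mu> (\<lambda>x. (norm x)\<^sup>2)"

definition prob_frame :: "('a::euclidean_space) set \<Rightarrow> 'a measure \<Rightarrow> bool" where
  "prob_frame W \<mu> \<longleftrightarrow> (\<exists>A B. 0 < A \<and> A \<le> B \<and>
      (\<forall>x\<in>W. A * (norm x)\<^sup>2 \<le> (\<integral>y. \<bar>x \<bullet> y\<bar>\<^sup>2 \<partial>\<mu>) \<and>
               (\<integral>y. \<bar>x \<bullet> y\<bar>\<^sup>2 \<partial>\<mu>) \<le> B * (norm x)\<^sup>2))"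

definition frame_op :: "(real^'n) measure \<Rightarrow> real^'n^'n" where
  "frame_op \<mu> = (\<chi> i j. \<integral>y. y $ i * y $ j \<partial>\<mu>)"

end

theory Submission
  imports Defs
begin

definition penrose :: "real^'n^'n \<Rightarrow> real^'n^'n \<Rightarrow> bool" where
  "penrose A B \<longleftrightarrow> A ** B ** A = A \<and> B ** A ** B = B \<and>
      transpose (A ** B) = A ** B \<and> transpose (B ** A) = B ** A"

lemma penrose_unique:
  assumes "penrose A B" "penrose A C" shows "B = C"
proof -
  have b1: "A ** B ** A = A" and b2: "B ** A ** B = B" and b3: "transpose (A ** B) = A ** B"
    and b4: "transpose (B ** A) = B ** A" using assms(1) by (auto simp: penrose_def)
  have c1: "A ** C ** A = A" and c2: "C ** A ** C = C" and c3: "transpose (A ** C) = A ** C"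
    and c4: "transpose (C ** A) = C ** A" using assms(2) by (auto simp: penrose_def)
  have tA1: "transpose A = transpose A ** transpose C ** transpose A"
    by (metis c1 matrix_transpose_mul matrix_mul_assoc)
  have tA2: "transpose A = transpose A ** transpose B ** transpose A"
    by (metis b1 matrix_transpose_mul matrix_mul_assoc)
  have "B = B ** (A ** B)" using b2 by (simp add: matrix_mul_assoc)
  also have "\<dots> = B ** transpose B ** transpose A" using b3
    by (metis matrix_transpose_mul matrix_mul_assoc)
  also have "\<dots> = B ** transpose B ** (transpose A ** transpose C ** transpose A)"
    using tA1 by simp
  also have "\<dots> = B ** transpose (A ** B) ** transpose (A ** C)"
    by (simp add: matrix_transpose_mul matrix_mul_assoc)
  also have "\<dots> = B ** A ** C" using b3 c3 c1 b2
    by (metis matrix_mul_assoc)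
  finally have B: "B = B ** A ** C" .
  have "C = (C ** A) ** C" using c2 by (simp add: matrix_mul_assoc)
  also have "\<dots> = transpose A ** transpose C ** C" using c4
    by (metis matrix_transpose_mul)
  also have "\<dots> = (transpose A ** transpose B ** transpose A) ** transpose C ** C"
    using tA2 by simp
  also have "\<dots> = transpose (B ** A) ** transpose (C ** A) ** C"
    by (simp add: matrix_transpose_mul matrix_mul_assoc)
  also have "\<dots> = B ** A ** C" using b4 c4 c1 c2
    by (metis matrix_mul_assoc)
  finally show ?thesis using B by simp
qed

lemma transpose_diff_mat: "transpose (mat 1 - (Q::real^'n^'n)) = mat 1 - transpose Q"
  by (simp add: transpose_def vec_eq_iff mat_def)

lemma penrose_exists_sym:
  fixes S :: "real^'n^'n"
  assumes symS: "transpose S = S"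
  shows "\<exists>B. penrose S B"
proof -
  define K where "K = {x. S *v x = 0}"
  have subK: "subspace K" unfolding K_def subspace_def
    by (auto simp: matrix_vector_right_distrib matrix_vector_mult_scaleR)
  obtain T where T0: "0 \<notin> T" and TK: "T \<subseteq> K" and Torth: "pairwise orthogonal T"
    and Tind: "independent T" and Tspan: "span T = K"
    using orthogonal_basis_subspace[OF subK] by metis
  have finT: "finite T" using Tind independent_imp_finite by blast
  define q where "q x = (\<Sum>b\<in>T. (b \<bullet> x / (b \<bullet> b)) *\<^sub>R b)" for x :: "real^'n"
  define Q :: "real^'n^'n" where "Q = (\<chi> i j. \<Sum>b\<in>T. b$i * b$j / (b \<bullet> b))"
  have Qv: "Q *v x = q x" for x
  proof -
    have "(Q *v x)$i = q x $ i" for i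
    proof -
      have "(Q *v x)$i = (\<Sum>j\<in>UNIV. \<Sum>b\<in>T. b$i*b$j/(b \<bullet> b) * x$j)"
        by (simp add: Q_def matrix_vector_mult_def sum_distrib_right)
      also have "\<dots> = (\<Sum>b\<in>T. \<Sum>j\<in>UNIV. b$i*b$j/(b \<bullet> b) * x$j)"
        by (rule sum.swap)
      also have "\<dots> = (\<Sum>b\<in>T. (b \<bullet> x / (b \<bullet> b)) * b$i)"
      proof (rule sum.cong[OF refl])
        fix b assume "b \<in> T"
        have "(b \<bullet> x / (b \<bullet> b)) * b$i = (\<Sum>j\<in>UNIV. b$j * x$j) * (b$i / (b \<bullet> b))"
          by (simp add: inner_vec_def)
        also have "\<dots> = (\<Sum>j\<in>UNIV. b$i*b$j/(b \<bullet> b) * x$j)"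
          by (simp add: sum_distrib_right sum_distrib_left sum_divide_distrib mult_ac)
        finally show "(\<Sum>j\<in>UNIV. b$i*b$j/(b \<bullet> b) * x$j) = (b \<bullet> x / (b \<bullet> b)) * b$i" by simp
      qed
      also have "\<dots> = q x $ i" by (simp add: q_def sum_component)
      finally show ?thesis .
    qed
    then show ?thesis by (simp add: vec_eq_iff)
  qed
  have symQ: "transpose Q = Q"
    unfolding Q_def by (simp add: transpose_def vec_eq_iff mult.commute)
  have qK: "q x \<in> K" for x
    proof -
    have "q x \<in> span T" unfolding q_def
      by (intro span_sum span_mul span_base)
    then show ?thesis using Tspan by simp
  qed
  have qid: "q x = x" if "x \<in> K" for x
  proof -
    have "x - q x \<in> K" using that qK subK by (simp add: subspace_diff)
    then have "orthogonal (x - q x) (x - q x)"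
      using Gram_Schmidt_step[OF Torth, of "x - q x" x] Tspan unfolding q_def by simp
    then have "x - q x = 0" by (simp only: orthogonal_self)
    then show ?thesis by simp
  qed
  have SQ: "S *v (Q *v x) = 0" for x using qK[of x] by (simp add: Qv K_def)
  have QS: "Q *v (S *v x) = 0" for x
  proof -
    have "b \<bullet> (S *v x) = 0" if "b \<in> T" for b
    proof -
      have "b \<bullet> (S *v x) = (b v* S) \<bullet> x" by (simp add: dot_lmul_matrix)
      also have "b v* S = transpose S *v b" by simp
      also have "\<dots> = 0" using symS TK that by (simp add: K_def subset_iff)
      finally show ?thesis by simp
    qed
    then show ?thesis by (simp add: Qv q_def)
  qed
  have QQ: "Q *v (Q *v x) = Q *v x" for x using qK qid Qv by simp
  define M where "M = S + Q"
  have Mv: "M *v x = S *v x + Q *v x" for x by (simp add: M_def matrix_vector_mult_add_rdistrib)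
  have "\<forall>x. M *v x = 0 \<longrightarrow> x = 0"
  proof (intro allI impI)
    fix x assume "M *v x = 0"
    then have e: "S *v x + Q *v x = 0" by (simp add: Mv)
    then have "Q *v (S *v x + Q *v x) = 0" by simp
    then have "Q *v x = 0" by (simp add: matrix_vector_right_distrib QS QQ)
    with e have "x \<in> K" by (simp add: K_def)
    then have "Q *v x = x" by (simp add: Qv qid)
    with \<open>Q *v x = 0\<close> show "x = 0" by simp
  qed
  then obtain N where NM: "N ** M = mat 1" using matrix_left_invertible_ker by blast
  then have MN: "M ** N = mat 1" using matrix_left_right_inverse by blast
  have NMv: "N *v (M *v x) = x" for x by (simp add: matrix_vector_mul_assoc NM)
  have MNv: "M *v (N *v x) = x" for x by (simp add: matrix_vector_mul_assoc MN)
  have NQ: "N *v (Q *v x) = Q *v x" for x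
    using NMv[of "Q *v x"] by (simp add: Mv SQ QQ)
  have QN: "Q *v (N *v x) = Q *v x" for x
  proof -
    have "Q *v (M *v y) = Q *v y" for y by (simp add: Mv matrix_vector_right_distrib QS QQ)
    from this[of "N *v x"] show ?thesis by (simp add: MNv)
  qed
  define B where "B = N - Q"
  have Bv: "B *v x = N *v x - Q *v x" for x by (simp add: B_def matrix_vector_mult_diff_rdistrib)
  have SB: "S ** B = mat 1 - Q"
  proof -
    have "S *v (B *v x) = x - Q *v x" for x
    proof -
      have "S *v (B *v x) = S *v (N *v x)"
        by (simp add: Bv matrix_vector_mult_diff_distrib SQ)
      also have "\<dots> = M *v (N *v x) - Q *v (N *v x)" by (simp add: Mv)
      finally show ?thesis by (simp add: MNv QN)
    qed
    then show ?thesis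
      by (simp add: matrix_eq matrix_vector_mul_assoc[symmetric] matrix_vector_mult_diff_rdistrib)
  qed
  have BS: "B ** S = mat 1 - Q"
  proof -
    have "B *v (S *v x) = x - Q *v x" for x
    proof -
      have "B *v (S *v x) = N *v (S *v x)" by (simp add: Bv QS)
      also have "\<dots> = N *v (M *v x - Q *v x)" by (simp add: Mv)
      also have "\<dots> = x - Q *v x" by (simp add: matrix_vector_mult_diff_distrib NMv NQ)
      finally show ?thesis .
    qed
    then show ?thesis
      by (simp add: matrix_eq matrix_vector_mul_assoc[symmetric] matrix_vector_mult_diff_rdistrib)
  qed
  have "S ** B ** S = S"
    by (simp add: SB matrix_eq matrix_vector_mul_assoc[symmetric] matrix_vector_mult_diff_rdistrib QS)
  moreover have "B ** S ** B = B"
  proof -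
    have "Q *v (B *v x) = 0" for x by (simp add: Bv matrix_vector_mult_diff_distrib QN QQ)
    then show ?thesis
      by (simp add: BS matrix_eq matrix_vector_mul_assoc[symmetric] matrix_vector_mult_diff_rdistrib)
  qed
  ultimately have "penrose S B"
    unfolding penrose_def using SB BS symQ by (simp add: transpose_diff_mat)
  then show ?thesis by blast
qed

lemma mp_pinv_sym:
  fixes S :: "real^'n^'n"
  assumes symS: "transpose S = S"
  shows "transpose (mp_pinv S) = mp_pinv S" "mp_pinv S ** S ** mp_pinv S = mp_pinv S"
proof -
  have ex: "\<exists>!B. penrose S B" using penrose_exists_sym[OF symS] penrose_unique by blast
  have P: "penrose S (mp_pinv S)"
    unfolding mp_pinv_def using theI'[OF ex] by (simp add: penrose_def)
  let ?B = "mp_pinv S"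
  have p1: "S ** ?B ** S = S" and p2: "?B ** S ** ?B = ?B" and p3: "transpose (S ** ?B) = S ** ?B"
    and p4: "transpose (?B ** S) = ?B ** S" using P by (auto simp: penrose_def)
  have e1: "S ** transpose ?B = ?B ** S"
    by (metis p4 matrix_transpose_mul symS)
  have e2: "transpose ?B ** S = S ** ?B"
    by (metis p3 matrix_transpose_mul symS)
  have "penrose S (transpose ?B)"
    unfolding penrose_def
  proof (intro conjI)
    show "S ** transpose ?B ** S = S" by (metis p1 matrix_transpose_mul symS matrix_mul_assoc)
    show "transpose ?B ** S ** transpose ?B = transpose ?B" by (metis p2 matrix_transpose_mul symS matrix_mul_assoc)
    show "transpose (S ** transpose ?B) = S ** transpose ?B" by (simp add: e1 p4)
    show "transpose (transpose ?B ** S) = transpose ?B ** S" by (simp add: e2 p3)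
  qed
  then show "transpose ?B = ?B" using P penrose_unique by blast
  show "?B ** S ** ?B = ?B" using P by (simp add: penrose_def)
qed

lemma oproj_eq:
  assumes "w \<in> W" "x - w \<in> U" "W \<inter> U = {0}" "subspace W" "subspace U"
  shows "oblique_proj W U x = w"
  unfolding oblique_proj_def
proof (rule the_equality)
  show "w \<in> W \<and> x - w \<in> U" using assms by simp
  fix w' assume "w' \<in> W \<and> x - w' \<in> U"
  then have "w - w' \<in> W" "w - w' \<in> U"
    using assms subspace_diff[of W w w'] subspace_diff[of U "x - w'" "x - w"] by auto
  then have "w - w' = 0" using assms(3) by blast
  then show "w' = w" by simp
qed

lemma oblique_adj:
  fixes W V :: "(real^'n) set"
  assumes subW: "subspace W" and subV: "subspace V"
    and dsum: "direct_sum_univ W (orthogonal_comp V)"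
  shows "oblique_proj W (orthogonal_comp V) f \<in> W"
    and "f \<bullet> oblique_proj V (orthogonal_comp W) y = oblique_proj W (orthogonal_comp V) f \<bullet> y"
proof -
  have int0: "W \<inter> orthogonal_comp V = {0}" using dsum by (simp add: direct_sum_univ_def)
  obtain w u where wu: "w \<in> W" "u \<in> orthogonal_comp V" "f = w + u"
    using dsum unfolding direct_sum_univ_def by blast
  have hw: "oblique_proj W (orthogonal_comp V) f = w"
    by (rule oproj_eq) (use wu int0 subW in \<open>auto simp: subspace_orthogonal_comp\<close>)
  then show "oblique_proj W (orthogonal_comp V) f \<in> W" using wu by simp
  have int1: "V \<inter> orthogonal_comp W = {0}"
  proof -
    have "v = 0" if v: "v \<in> V" "v \<in> orthogonal_comp W" for v
    proof -
      obtain a b where ab: "a \<in> W" "b \<in> orthogonal_comp V" "v = a + b"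
        using dsum unfolding direct_sum_univ_def by blast
      have "v \<bullet> a = 0" using v(2) ab(1) by (simp add: orthogonal_comp_def orthogonal_def inner_commute)
      moreover have "v \<bullet> b = 0" using v(1) ab(2) by (simp add: orthogonal_comp_def orthogonal_def)
      ultimately have "v \<bullet> v = 0" using ab(3) by (simp add: inner_add_right)
      then show ?thesis by simp
    qed
    moreover have "0 \<in> V \<inter> orthogonal_comp W"
      using subV by (simp add: subspace_0 subspace_orthogonal_comp)
    ultimately show ?thesis by blast
  qed
  define U where "U = {a + b |a b. a \<in> V \<and> b \<in> orthogonal_comp W}"
  have subU: "subspace U" unfolding U_def
    by (rule subspace_sums[OF subV subspace_orthogonal_comp])
  have "orthogonal_comp U = {0}"
  proof -
    have "z = 0" if z: "z \<in> orthogonal_comp U" for z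
    proof -
      have "orthogonal a z" if "a \<in> V" for a
      proof -
        have "a + 0 \<in> U" unfolding U_def using that
          by (blast intro: subspace_0[OF subspace_orthogonal_comp])
        then show "orthogonal a z" using z by (simp add: orthogonal_comp_def)
      qed
      then have "z \<in> orthogonal_comp V" by (simp add: orthogonal_comp_def)
      moreover have "orthogonal b z" if "b \<in> orthogonal_comp W" for b
      proof -
        have "0 + b \<in> U" unfolding U_def using subspace_0[OF subV] that by blast
        then show "orthogonal b z" using z by (simp add: orthogonal_comp_def)
      qed
      then have "z \<in> orthogonal_comp (orthogonal_comp W)" by (simp add: orthogonal_comp_def)
      then have "z \<in> W" using orthogonal_comp_self[OF subW] by simp
      ultimately show ?thesis using int0 by blast
    qed
    moreover have "0 \<in> orthogonal_comp U" by (simp add: subspace_0 subspace_orthogonal_comp)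
    ultimately show ?thesis by blast
  qed
  then have "U = UNIV" using orthogonal_comp_self[OF subU] by simp
  then obtain a b where ab: "a \<in> V" "b \<in> orthogonal_comp W" "y = a + b"
    unfolding U_def by blast
  have pa: "oblique_proj V (orthogonal_comp W) y = a"
    by (rule oproj_eq) (use ab int1 subV in \<open>auto simp: subspace_orthogonal_comp\<close>)
  have au: "u \<bullet> a = 0" using wu(2) ab(1) by (simp add: orthogonal_comp_def orthogonal_def inner_commute)
  have wb: "w \<bullet> b = 0" using wu(1) ab(2) by (simp add: orthogonal_comp_def orthogonal_def)
  have "f \<bullet> a = w \<bullet> a"
    using wu(3) au by (simp add: inner_add_left)
  also have "\<dots> = w \<bullet> y"
    using ab(3) wb by (simp add: inner_add_right)
  finally show "f \<bullet> oblique_proj V (orthogonal_comp W) y = oblique_proj W (orthogonal_comp V) f \<bullet> y"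
    using pa hw by simp
qed

lemma frame_op_sym: "transpose (frame_op \<mu>) = frame_op \<mu>"
  by (simp add: transpose_def frame_op_def vec_eq_iff mult.commute)

lemma quad_integral:
  fixes \<mu> :: "(real^'n) measure" and u :: "real^'n"
  assumes sets: "sets \<mu> = sets borel" and fin: "finite_measure \<mu>"
    and sq: "integrable \<mu> (\<lambda>x. (norm x)\<^sup>2)"
  shows "integrable \<mu> (\<lambda>x. (u \<bullet> x)\<^sup>2)" "(\<integral>x. (u \<bullet> x)\<^sup>2 \<partial>\<mu>) = u \<bullet> (frame_op \<mu> *v u)"
proof -
  have meas: "borel_measurable \<mu> = borel_measurable borel"
    using sets by (intro measurable_cong_sets) auto
  have ij: "integrable \<mu> (\<lambda>x. x$i * x$j)" for i j
  proof (rule Bochner_Integration.integrable_bound[OF sq])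
    show "(\<lambda>x. x$i * x$j) \<in> borel_measurable \<mu>" unfolding meas by measurable
    show "AE x in \<mu>. norm (x$i * x$j) \<le> norm ((norm x)\<^sup>2)"
    proof (intro AE_I2)
      fix x :: "real^'n"
      have "\<bar>x$i\<bar> * \<bar>x$j\<bar> \<le> norm x * norm x"
        by (intro mult_mono) (auto simp: component_le_norm_cart)
      then show "norm (x$i * x$j) \<le> norm ((norm x)\<^sup>2)" by (simp add: abs_mult power2_eq_square)
    qed
  qed
  have expand: "(u \<bullet> x)\<^sup>2 = (\<Sum>i\<in>UNIV. \<Sum>j\<in>UNIV. u$i * u$j * (x$i * x$j))" for x :: "real^'n"
    by (simp add: inner_vec_def power2_eq_square sum_product mult_ac)
  show "integrable \<mu> (\<lambda>x. (u \<bullet> x)\<^sup>2)"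
    unfolding expand by (intro Bochner_Integration.integrable_sum Bochner_Integration.integrable_mult_right ij)
  have "(\<integral>x. (u \<bullet> x)\<^sup>2 \<partial>\<mu>) = (\<Sum>i\<in>UNIV. \<Sum>j\<in>UNIV. u$i * u$j * (\<integral>x. x$i * x$j \<partial>\<mu>))"
    unfolding expand using ij by (simp add: integral_sum)
  also have "\<dots> = u \<bullet> (frame_op \<mu> *v u)"
    by (simp add: inner_vec_def frame_op_def matrix_vector_mult_def sum_distrib_left mult_ac)
  finally show "(\<integral>x. (u \<bullet> x)\<^sup>2 \<partial>\<mu>) = u \<bullet> (frame_op \<mu> *v u)" .
qed

theorem proposition5p1:
  fixes W V :: "(real^'n) set" and \<mu> :: "(real^'n) measure"
    and f :: "real^'n" and \<omega> :: "real^'n \<Rightarrow> real"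
  assumes subW: "subspace W" and subV: "subspace V"
    and dsum: "direct_sum_univ W (orthogonal_comp V)"
    and P2: "P2 W \<mu>" and frame: "prob_frame W \<mu>"
    and \<omega>_meas: "\<omega> \<in> borel_measurable \<mu>"
    and \<omega>_L2: "integrable \<mu> (\<lambda>x. (\<omega> x)\<^sup>2)"
    and repr: "oblique_proj W (orthogonal_comp V) f = (\<integral>x. \<omega> x *\<^sub>R x \<partial>\<mu>)"
  defines "g \<equiv> (\<lambda>x. f \<bullet> oblique_proj V (orthogonal_comp W) (mp_pinv (frame_op \<mu>) *v x))"
  shows "(\<integral>x. \<bar>\<omega> x\<bar>\<^sup>2 \<partial>\<mu>) = (\<integral>x. \<bar>g x\<bar>\<^sup>2 \<partial>\<mu>) + (\<integral>x. \<bar>\<omega> x - g x\<bar>\<^sup>2 \<partial>\<mu>) \<and>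
    (\<integral>x. \<bar>\<omega> x\<bar>\<^sup>2 \<partial>\<mu>) \<ge> (\<integral>x. \<bar>g x\<bar>\<^sup>2 \<partial>\<mu>) \<and>
    ((\<integral>x. \<bar>\<omega> x\<bar>\<^sup>2 \<partial>\<mu>) = (\<integral>x. \<bar>g x\<bar>\<^sup>2 \<partial>\<mu>) \<longleftrightarrow> (AE x in \<mu>. \<omega> x = g x))"
proof -
  have ps: "prob_space \<mu>" and sets: "sets \<mu> = sets borel" and sq: "integrable \<mu> (\<lambda>x. (norm x)\<^sup>2)"
    using P2 by (auto simp: P2_def)
  have fin: "finite_measure \<mu>" using ps by (simp add: prob_space_def)
  have meas: "borel_measurable \<mu> = borel_measurable borel"
    using sets by (intro measurable_cong_sets) auto
  define h where "h = oblique_proj W (orthogonal_comp V) f"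
  define S where "S = frame_op \<mu>"
  define B where "B = mp_pinv S"
  have symB: "transpose B = B" and BSB: "B ** S ** B = B"
    using mp_pinv_sym[OF frame_op_sym[of \<mu>]] by (simp_all add: B_def S_def)
  define u where "u = B *v h"
  have g_eq: "g = (\<lambda>x. u \<bullet> x)"
  proof
    fix x
    have "g x = h \<bullet> (B *v x)"
      unfolding g_def h_def B_def S_def using oblique_adj(2)[OF subW subV dsum] by simp
    also have "\<dots> = (h v* B) \<bullet> x" by (simp add: dot_lmul_matrix)
    also have "h v* B = transpose B *v h" by simp
    finally show "g x = u \<bullet> x" by (simp add: symB u_def)
  qed
  have ix: "integrable \<mu> (\<lambda>x. \<omega> x *\<^sub>R x)"
  proof (rule Bochner_Integration.integrable_bound[OF Bochner_Integration.integrable_add[OF \<omega>_L2 sq]])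
    show "(\<lambda>x. \<omega> x *\<^sub>R x) \<in> borel_measurable \<mu>"
      using \<omega>_meas by (intro borel_measurable_scaleR) (auto simp: meas)
    show "AE x in \<mu>. norm (\<omega> x *\<^sub>R x) \<le> norm ((\<omega> x)\<^sup>2 + (norm x)\<^sup>2)"
    proof (intro AE_I2)
      fix x :: "real^'n"
      have a: "0 \<le> (\<bar>\<omega> x\<bar> - norm x)\<^sup>2" by simp
      have b: "0 \<le> \<bar>\<omega> x\<bar> * norm x" by simp
      have "2 * (\<bar>\<omega> x\<bar> * norm x) \<le> (\<omega> x)\<^sup>2 + (norm x)\<^sup>2"
        using a by (simp add: power2_diff power2_abs)
      then have "\<bar>\<omega> x\<bar> * norm x \<le> (\<omega> x)\<^sup>2 + (norm x)\<^sup>2" using b by linarith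
      then show "norm (\<omega> x *\<^sub>R x) \<le> norm ((\<omega> x)\<^sup>2 + (norm x)\<^sup>2)" by simp
    qed
  qed
  have hint: "h = (\<integral>x. \<omega> x *\<^sub>R x \<partial>\<mu>)" using repr by (simp add: h_def)
  have gm: "g \<in> borel_measurable \<mu>" unfolding g_eq meas by measurable
  have g2: "integrable \<mu> (\<lambda>x. (g x)\<^sup>2)" and G: "(\<integral>x. (g x)\<^sup>2 \<partial>\<mu>) = u \<bullet> (S *v u)"
    using quad_integral[OF sets fin sq, of u] by (simp_all add: g_eq S_def)
  have wg_int: "integrable \<mu> (\<lambda>x. \<omega> x * g x)"
  proof -
    have "integrable \<mu> (\<lambda>x. u \<bullet> (\<omega> x *\<^sub>R x))"
      using ix by (rule Bochner_Integration.integrable_inner_right)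
    then show ?thesis by (simp add: g_eq)
  qed
  have wg: "(\<integral>x. \<omega> x * g x \<partial>\<mu>) = u \<bullet> h"
  proof -
    have "(\<integral>x. \<omega> x * g x \<partial>\<mu>) = (\<integral>x. u \<bullet> (\<omega> x *\<^sub>R x) \<partial>\<mu>)"
      by (simp add: g_eq inner_scaleR_right)
    also have "\<dots> = u \<bullet> h"
      using Bochner_Integration.integral_inner_right[of u \<mu> "\<lambda>x. \<omega> x *\<^sub>R x"] ix hint by simp
    finally show ?thesis .
  qed
  have u3: "h v* B = u" using symB unfolding u_def by (metis transpose_matrix_vector)
  have "u \<bullet> (S *v u) = (h v* B) \<bullet> (S *v u)" using u3 by simp
  also have "\<dots> = h \<bullet> (B *v (S *v u))" by (rule dot_lmul_matrix)
  also have "B *v (S *v u) = (B ** S ** B) *v h" by (simp add: u_def matrix_vector_mul_assoc matrix_mul_assoc)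
  also have "\<dots> = u" using BSB by (simp add: u_def)
  finally have GG: "(\<integral>x. (g x)\<^sup>2 \<partial>\<mu>) = (\<integral>x. \<omega> x * g x \<partial>\<mu>)"
    using G wg by (simp add: inner_commute)
  have expand: "(\<omega> x - g x)\<^sup>2 = (\<omega> x)\<^sup>2 - 2 * (\<omega> x * g x) + (g x)\<^sup>2" for x
    by (simp add: power2_diff)
  have d_int: "integrable \<mu> (\<lambda>x. (\<omega> x - g x)\<^sup>2)"
    unfolding expand using \<omega>_L2 wg_int g2 by auto
  have D: "(\<integral>x. (\<omega> x - g x)\<^sup>2 \<partial>\<mu>) = (\<integral>x. (\<omega> x)\<^sup>2 \<partial>\<mu>) - (\<integral>x. (g x)\<^sup>2 \<partial>\<mu>)"
    unfolding expand using \<omega>_L2 wg_int g2 GG by simp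
  have Dnn: "0 \<le> (\<integral>x. (\<omega> x - g x)\<^sup>2 \<partial>\<mu>)" by simp
  have AE: "(\<integral>x. (\<omega> x - g x)\<^sup>2 \<partial>\<mu>) = 0 \<longleftrightarrow> (AE x in \<mu>. \<omega> x = g x)"
    using integral_nonneg_eq_0_iff_AE[OF d_int] by simp
  show ?thesis using D Dnn AE by (simp add: power2_abs)
qed

end
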